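(* Let $V\subset\mathbb{Z}^2$ be site-connected. Then each vertex of the graph $B(V)$ has degree two. Consequently $B(V)$ is a vertex-disjoint union of vertex self-avoiding circuits and vertex self-avoiding doubly-infinite paths. If moreover $V$ is infinite, then $B(V)$ contains no vertex self-avoiding circuits.
   Context: Vertices $x,y\in\mathbb{Z}^2$ are site-neighbors if $\|x-y\|_1=1$. A set $W\subset\mathbb{Z}^2$ is site-connected if any two of its points are joined by a path of successive site-neighbors staying in $W$; a site-component of $W$ is a maximal site-connected subset. The closure $\overline{V}$ of $V\subset\mathbb{Z}^2$ is the union of $V$ with all finite site-components of $\mathbb{Z}^2\setminus V$. The dual lattice has vertex set $\mathbb{Z}^2+(\tfrac12,\tfrac12)$ and edges between points at Euclidean distance 1; each dual edge bisects a unique edge $\{x,y\}$ of $\mathbb{Z}^2$. The dual edge boundary $B(V)$ is the subgraph of the dual lattice induced by the set of dual edges whose bisecting edge $\{x,y\}$ has $x\in\overline{V}$ and $y\notin\overline{V}$. *)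

theory Defs
  imports Main
begin

type_synonym pt = "int \<times> int"

definition site_adj :: "pt \<Rightarrow> pt \<Rightarrow> bool" where
  "site_adj x y \<longleftrightarrow> \<bar>fst x - fst y\<bar> + \<bar>snd x - snd y\<bar> = 1"

definition site_path :: "pt set \<Rightarrow> pt \<Rightarrow> pt \<Rightarrow> bool" where
  "site_path W = (\<lambda>a b. a \<in> W \<and> b \<in> W \<and> site_adj a b)\<^sup>*\<^sup>*"

definition site_connected :: "pt set \<Rightarrow> bool" where
  "site_connected W \<longleftrightarrow> (\<forall>x\<in>W. \<forall>y\<in>W. site_path W x y)"

definition site_component :: "pt set \<Rightarrow> pt set \<Rightarrow> bool" where
  "site_component W C \<longleftrightarrow> C \<noteq> {} \<and> C \<subseteq> W \<and> site_connected C \<and>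
     (\<forall>D. C \<subseteq> D \<and> D \<subseteq> W \<and> site_connected D \<longrightarrow> D = C)"

definition lattice_closure :: "pt set \<Rightarrow> pt set" where
  "lattice_closure V = V \<union> \<Union>{C. site_component (- V) C \<and> finite C}"

text \<open>Dual lattice convention: the dual vertex (a+1/2, b+1/2) is represented by
  the integer pair (a,b). Two dual vertices are joined by a dual edge iff their
  Euclidean distance is 1, i.e. iff their representatives are site-neighbours.
  The dual edge {p,q} bisects the primal edge {x,y} iff {x,y} is an edge of Z^2
  with the same midpoint, i.e. x + y = (p + (1/2,1/2)) + (q + (1/2,1/2)).\<close>
definition dual_adj :: "pt \<Rightarrow> pt \<Rightarrow> bool" where
  "dual_adj p q \<longleftrightarrow> site_adj p q"

definition bisects :: "pt \<Rightarrow> pt \<Rightarrow> pt \<Rightarrow> pt \<Rightarrow> bool" where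
  "bisects p q x y \<longleftrightarrow> dual_adj p q \<and> site_adj x y \<and>
     fst x + fst y = fst p + fst q + 1 \<and> snd x + snd y = snd p + snd q + 1"

definition B_edge :: "pt set \<Rightarrow> pt \<Rightarrow> pt \<Rightarrow> bool" where
  "B_edge V p q \<longleftrightarrow> (\<exists>x y. bisects p q x y \<and>
     ((x \<in> lattice_closure V \<and> y \<notin> lattice_closure V) \<or>
      (y \<in> lattice_closure V \<and> x \<notin> lattice_closure V)))"

definition B_verts :: "pt set \<Rightarrow> pt set" where
  "B_verts V = {p. \<exists>q. B_edge V p q}"

definition B_degree :: "pt set \<Rightarrow> pt \<Rightarrow> nat" where
  "B_degree V p = card {q. B_edge V p q}"

definition is_circuit :: "(pt \<Rightarrow> pt \<Rightarrow> bool) \<Rightarrow> nat \<Rightarrow> (nat \<Rightarrow> pt) \<Rightarrow> bool" where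
  "is_circuit E n c \<longleftrightarrow> n \<ge> 3 \<and> inj_on c {..<n} \<and> (\<forall>i<n. E (c i) (c ((i + 1) mod n)))"

definition is_biinf_path :: "(pt \<Rightarrow> pt \<Rightarrow> bool) \<Rightarrow> (int \<Rightarrow> pt) \<Rightarrow> bool" where
  "is_biinf_path E f \<longleftrightarrow> inj f \<and> (\<forall>i. E (f i) (f (i + 1)))"

end

theory Submission
  imports Defs
begin


lemma site_adj_iff:
  "site_adj x y \<longleftrightarrow> y = (fst x + 1, snd x) \<or> y = (fst x - 1, snd x) \<or> y = (fst x, snd x + 1) \<or> y = (fst x, snd x - 1)"
  by (cases x; cases y) (auto simp: site_adj_def abs_if)

lemma site_adj_sym: "site_adj x y \<Longrightarrow> site_adj y x"
  by (auto simp: site_adj_def abs_minus_commute)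

lemma bisects_iff:
  "bisects (a,b) q x y \<longleftrightarrow>
    (q = (a+1,b) \<and> (x = (a+1,b) \<and> y = (a+1,b+1) \<or> x = (a+1,b+1) \<and> y = (a+1,b))) \<or>
    (q = (a-1,b) \<and> (x = (a,b) \<and> y = (a,b+1) \<or> x = (a,b+1) \<and> y = (a,b))) \<or>
    (q = (a,b+1) \<and> (x = (a,b+1) \<and> y = (a+1,b+1) \<or> x = (a+1,b+1) \<and> y = (a,b+1))) \<or>
    (q = (a,b-1) \<and> (x = (a,b) \<and> y = (a+1,b) \<or> x = (a+1,b) \<and> y = (a,b)))" (is "_ \<longleftrightarrow> ?R")
proof
  assume h: "bisects (a,b) q x y"
  obtain q1 q2 x1 x2 y1 y2 where e: "q = (q1,q2)" "x = (x1,x2)" "y = (y1,y2)" by (cases q, cases x, cases y) auto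
  from h[unfolded bisects_def dual_adj_def e] have
    1: "site_adj (a,b) (q1,q2)" and 2: "site_adj (x1,x2) (y1,y2)" and 3: "x1 + y1 = a + q1 + 1" "x2+y2 = b + q2 + 1" by auto
  from 1 2 3 show "?R" unfolding site_adj_iff e by (elim disjE) auto
next
  assume "?R" then show "bisects (a,b) q x y"
    unfolding bisects_def dual_adj_def site_adj_iff by auto
qed

lemma bisects_dual_unique:
  assumes "bisects p q x y" "bisects p' q' x y"
  shows "(p = p' \<and> q = q') \<or> (p = q' \<and> q = p')"
proof -
  obtain a b where p: "p = (a,b)" by (cases p)
  obtain a' b' where p': "p' = (a',b')" by (cases p')
  show ?thesis using assms unfolding p p' bisects_iff by auto
qed

lemma bisects_primal_unique:
  assumes "bisects p q x y" "bisects p q x' y'"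
  shows "(x = x' \<and> y = y') \<or> (x = y' \<and> y = x')"
proof -
  obtain a b where p: "p = (a,b)" by (cases p)
  show ?thesis using assms unfolding p bisects_iff by auto
qed

lemma bisects_swap: "bisects p q x y \<Longrightarrow> bisects p q y x"
  by (auto simp: bisects_def site_adj_def abs_minus_commute)

lemma bisects_swap2: "bisects p q x y \<Longrightarrow> bisects q p x y"
  by (auto simp: bisects_def dual_adj_def site_adj_def abs_minus_commute)

lemma exists_bisector: "site_adj x y \<Longrightarrow> \<exists>p q. bisects p q x y"
proof -
  assume h: "site_adj x y"
  obtain a b where x: "x = (a,b)" by (cases x)
  from h have "y = (fst (a, b) + 1, snd (a, b)) \<or> y = (fst (a, b) - 1, snd (a, b)) \<or> y = (fst (a, b), snd (a, b) + 1) \<or> y = (fst (a, b), snd (a, b) - 1)"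
    unfolding x site_adj_iff .
  then show ?thesis
  proof (elim disjE)
    assume "y = (fst (a, b) + 1, snd (a, b))"
    then have "bisects (a,b) (a,b-1) x y" unfolding x bisects_iff by auto
    then show ?thesis by blast
  next
    assume "y = (fst (a, b) - 1, snd (a, b))"
    then have "bisects (a-1,b) (a-1,b-1) x y" unfolding x bisects_iff by auto
    then show ?thesis by blast
  next
    assume "y = (fst (a, b), snd (a, b) + 1)"
    then have "bisects (a-1,b) (a,b) x y" unfolding x bisects_iff by auto
    then show ?thesis by blast
  next
    assume "y = (fst (a, b), snd (a, b) - 1)"
    then have "bisects (a-1,b-1) (a,b-1) x y" unfolding x bisects_iff by auto
    then show ?thesis by blast
  qed
qed

definition cnt :: "(nat \<Rightarrow> pt) \<Rightarrow> nat \<Rightarrow> pt \<Rightarrow> pt \<Rightarrow> nat" where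
  "cnt g N s t = (\<Sum>i<N. if (g i = s \<and> g (Suc i) = t) \<or> (g i = t \<and> g (Suc i) = s) then 1 else 0)"

definition vstep :: "pt \<Rightarrow> pt \<Rightarrow> int \<Rightarrow> int \<Rightarrow> bool" where
  "vstep s t c d \<longleftrightarrow> fst s = fst t \<and> fst s > c \<and> ((snd s = d \<and> snd t = d+1) \<or> (snd s = d+1 \<and> snd t = d))"

definition cr :: "(nat \<Rightarrow> pt) \<Rightarrow> nat \<Rightarrow> int \<Rightarrow> int \<Rightarrow> nat" where
  "cr g N c d = (\<Sum>i<N. if vstep (g i) (g (Suc i)) c d then 1 else 0)"

definition chg :: "(nat \<Rightarrow> pt) \<Rightarrow> nat \<Rightarrow> pt set \<Rightarrow> nat" where
  "chg g N H = (\<Sum>i<N. if (g i \<in> H) \<noteq> (g (Suc i) \<in> H) then 1 else 0)"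

lemma chg_parity: "even (chg g N H) \<longleftrightarrow> ((g 0 \<in> H) = (g N \<in> H))"
  by (induction N) (auto simp: chg_def)

lemma cnt_sym: "cnt g N s t = cnt g N t s"
  unfolding cnt_def by (rule sum.cong) auto

lemma cr_h: "cr g N c d = cr g N (c+1) d + cnt g N (c+1,d) (c+1,d+1)"
  unfolding cr_def cnt_def sum.distrib[symmetric]
proof (rule sum.cong)
  fix i
  obtain s1 s2 where s: "g i = (s1,s2)" by (cases "g i")
  obtain t1 t2 where t: "g (Suc i) = (t1,t2)" by (cases "g (Suc i)")
  show "(if vstep (g i) (g (Suc i)) c d then 1 else 0) =
         (if vstep (g i) (g (Suc i)) (c + 1) d then 1 else 0) +
         (if g i = (c + 1, d) \<and> g (Suc i) = (c + 1, d + 1) \<or> g i = (c + 1, d + 1) \<and> g (Suc i) = (c + 1, d) then 1 else (0::nat))"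
    unfolding s t vstep_def by auto
qed simp

lemma cr_v:
  assumes adj: "\<forall>i<N. site_adj (g i) (g (Suc i))" and cl: "g 0 = g N"
  shows "even (cr g N c d + cr g N c (d+1) + cnt g N (c,d+1) (c+1,d+1))"
proof -
  let ?H = "{p. fst p > c \<and> snd p = d+1}"
  have "cr g N c d + cr g N c (d+1) + cnt g N (c,d+1) (c+1,d+1) = chg g N ?H"
    unfolding cr_def cnt_def chg_def sum.distrib[symmetric]
  proof (rule sum.cong)
    fix i assume "i \<in> {..<N}"
    then have a: "site_adj (g i) (g (Suc i))" using adj by auto
    obtain s1 s2 where s: "g i = (s1,s2)" by (cases "g i")
    obtain t1 t2 where t: "g (Suc i) = (t1,t2)" by (cases "g (Suc i)")
    from a show "(if vstep (g i) (g (Suc i)) c d then 1 else 0) +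
          (if vstep (g i) (g (Suc i)) c (d + 1) then 1 else 0) +
          (if g i = (c, d + 1) \<and> g (Suc i) = (c + 1, d + 1) \<or> g i = (c + 1, d + 1) \<and> g (Suc i) = (c, d + 1) then 1 else 0) =
          (if (g i \<in> ?H) \<noteq> (g (Suc i) \<in> ?H) then 1 else (0::nat))"
      unfolding s t vstep_def site_adj_iff by (elim disjE) auto
  qed simp
  then show ?thesis using chg_parity[of g N ?H] cl by simp
qed

lemma cr_far:
  assumes adj: "\<forall>i<N. site_adj (g i) (g (Suc i))" and cl: "g 0 = g N"
    and bd: "\<forall>i\<le>N. \<bar>fst (g i)\<bar> \<le> M \<and> \<bar>snd (g i)\<bar> \<le> M"
    and od: "odd (cr g N c d)"
  shows "-M \<le> c \<and> c < M \<and> -M \<le> d \<and> d < M"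
proof -
  have z: "cr g N c d = 0" if "\<forall>i<N. \<not> vstep (g i) (g (Suc i)) c d"
    unfolding cr_def using that by simp
  have "c < M"
  proof (rule ccontr)
    assume "\<not> c < M"
    then have "\<forall>i<N. \<not> vstep (g i) (g (Suc i)) c d"
    proof (intro allI impI)
      fix i assume "i < N"
      then have "\<bar>fst (g i)\<bar> \<le> M" using bd by auto
      then show "\<not> vstep (g i) (g (Suc i)) c d" using \<open>\<not> c < M\<close>
        unfolding vstep_def by auto
    qed
    then show False using z od by simp
  qed
  moreover have "-M \<le> d \<and> d < M"
  proof (rule ccontr)
    assume "\<not> (-M \<le> d \<and> d < M)"
    then have "\<forall>i<N. \<not> vstep (g i) (g (Suc i)) c d"
    proof (intro allI impI)
      fix i assume "i < N"
      then have "\<bar>snd (g i)\<bar> \<le> M" "\<bar>snd (g (Suc i))\<bar> \<le> M" using bd by auto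
      then show "\<not> vstep (g i) (g (Suc i)) c d" using \<open>\<not> (-M \<le> d \<and> d < M)\<close>
        unfolding vstep_def by auto
    qed
    then show False using z od by simp
  qed
  moreover have "-M \<le> c"
  proof (rule ccontr)
    assume cM: "\<not> -M \<le> c"
    let ?H = "{p. snd p \<ge> d+1}"
    have "cr g N c d = chg g N ?H"
      unfolding cr_def chg_def
    proof (rule sum.cong)
      fix i assume "i \<in> {..<N}"
      then have a: "site_adj (g i) (g (Suc i))" and b: "\<bar>fst (g i)\<bar> \<le> M" using adj bd by auto
      obtain s1 s2 where s: "g i = (s1,s2)" by (cases "g i")
      obtain t1 t2 where t: "g (Suc i) = (t1,t2)" by (cases "g (Suc i)")
      from a b cM show "(if vstep (g i) (g (Suc i)) c d then 1 else 0) =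
          (if (g i \<in> ?H) \<noteq> (g (Suc i) \<in> ?H) then 1 else (0::nat))"
        unfolding s t vstep_def site_adj_iff by (elim disjE) auto
    qed simp
    then show False using chg_parity[of g N ?H] cl od by simp
  qed
  ultimately show ?thesis by simp
qed

definition Fv :: "(nat \<Rightarrow> pt) \<Rightarrow> nat \<Rightarrow> pt \<Rightarrow> bool" where
  "Fv g N v \<longleftrightarrow> odd (cr g N (fst v - 1) (snd v - 1))"

lemma Fv_finite:
  assumes adj: "\<forall>i<N. site_adj (g i) (g (Suc i))" and cl: "g 0 = g N"
  shows "finite {v. Fv g N v}"
proof -
  define M where "M = (\<Sum>i\<le>N. \<bar>fst (g i)\<bar> + \<bar>snd (g i)\<bar>)"
  have bd: "\<forall>i\<le>N. \<bar>fst (g i)\<bar> \<le> M \<and> \<bar>snd (g i)\<bar> \<le> M"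
  proof (intro allI impI)
    fix i assume "i \<le> N"
    then have "\<bar>fst (g i)\<bar> + \<bar>snd (g i)\<bar> \<le> M"
      unfolding M_def by (intro member_le_sum) auto
    then show "\<bar>fst (g i)\<bar> \<le> M \<and> \<bar>snd (g i)\<bar> \<le> M" by auto
  qed
  have "{v. Fv g N v} \<subseteq> {-M+1..M} \<times> {-M+1..M}"
  proof
    fix v assume "v \<in> {v. Fv g N v}"
    then have "odd (cr g N (fst v - 1) (snd v - 1))" by (simp add: Fv_def)
    from cr_far[OF adj cl bd this] show "v \<in> {-M+1..M} \<times> {-M+1..M}"
      by (cases v) auto
  qed
  then show ?thesis by (rule finite_subset) auto
qed

lemma F_right: "Fv g N (a,b) \<noteq> Fv g N (a+1,b) \<longleftrightarrow> odd (cnt g N (a,b-1) (a,b))"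
  using cr_h[of g N "a-1" "b-1"] by (auto simp: Fv_def)

lemma F_up:
  assumes adj: "\<forall>i<N. site_adj (g i) (g (Suc i))" and cl: "g 0 = g N"
  shows "Fv g N (a,b) \<noteq> Fv g N (a,b+1) \<longleftrightarrow> odd (cnt g N (a-1,b) (a,b))"
  using cr_v[OF adj cl, of "a-1" "b-1"] by (auto simp: Fv_def)

lemma F_adj:
  assumes adj: "\<forall>i<N. site_adj (g i) (g (Suc i))" and cl: "g 0 = g N"
    and xy: "site_adj x y" and bi: "bisects p q x y"
  shows "Fv g N x \<noteq> Fv g N y \<longleftrightarrow> odd (cnt g N p q)"
proof -
  obtain a b where x: "x = (a,b)" by (cases x)
  have key: "odd (cnt g N p q) \<longleftrightarrow> odd (cnt g N p' q')" if "bisects p' q' x y" for p' q'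
    using bisects_dual_unique[OF bi that] cnt_sym by metis
  from xy have "y = (fst (a, b) + 1, snd (a, b)) \<or> y = (fst (a, b) - 1, snd (a, b)) \<or> y = (fst (a, b), snd (a, b) + 1) \<or> y = (fst (a, b), snd (a, b) - 1)"
    unfolding x site_adj_iff .
  then show ?thesis
  proof (elim disjE)
    assume y: "y = (fst (a, b) + 1, snd (a, b))"
    have "bisects (a,b-1) (a,b) x y" unfolding x y bisects_iff by auto
    then show ?thesis using F_right[of g N a b] key x y by auto
  next
    assume y: "y = (fst (a, b) - 1, snd (a, b))"
    have "bisects (a-1,b-1) (a-1,b) x y" unfolding x y bisects_iff by auto
    then show ?thesis using F_right[of g N "a-1" b] key x y by auto
  next
    assume y: "y = (fst (a, b), snd (a, b) + 1)"
    have "bisects (a-1,b) (a,b) x y" unfolding x y bisects_iff by auto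
    then show ?thesis using F_up[OF adj cl, of a b] key x y by auto
  next
    assume y: "y = (fst (a, b), snd (a, b) - 1)"
    have "bisects (a-1,b-1) (a,b-1) x y" unfolding x y bisects_iff by auto
    then show ?thesis using F_up[OF adj cl, of a "b-1"] key x y by auto
  qed
qed



lemma rtranclp_seq:
  assumes "R\<^sup>*\<^sup>* a b"
  shows "\<exists>n f. f 0 = a \<and> f n = b \<and> (\<forall>i<n. R (f i) (f (Suc i)))"
  using assms
proof (induction rule: rtranclp_induct)
  case base
  show ?case by (rule exI[of _ 0], rule exI[of _ "\<lambda>_. a"]) simp
next
  case (step y z)
  then obtain n f where f: "f 0 = a" "f n = y" "\<forall>i<n. R (f i) (f (Suc i))" by blast
  define f' where "f' = f(Suc n := z)"
  have "f' 0 = a" "f' (Suc n) = z" using f by (auto simp: f'_def)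
  moreover have "\<forall>i<Suc n. R (f' i) (f' (Suc i))"
  proof (intro allI impI)
    fix i assume "i < Suc n"
    then consider "i < n" | "i = n" by linarith
    then show "R (f' i) (f' (Suc i))"
    proof cases
      case 1 then show ?thesis using f by (auto simp: f'_def)
    next
      case 2 then show ?thesis using f step by (auto simp: f'_def)
    qed
  qed
  ultimately show ?case by blast
qed

definition sitecomp :: "pt set \<Rightarrow> pt \<Rightarrow> pt set" where
  "sitecomp W y = {z. site_path W y z}"

lemma site_path_step: "site_path W a b \<Longrightarrow> b \<in> W \<Longrightarrow> c \<in> W \<Longrightarrow> site_adj b c \<Longrightarrow> site_path W a c"
  unfolding site_path_def
  using rtranclp.rtrancl_into_rtrancl[of "\<lambda>a b. a \<in> W \<and> b \<in> W \<and> site_adj a b" a b c] by simp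

lemma site_path_refl: "site_path W a a"
  unfolding site_path_def by simp

lemma site_path_trans: "site_path W a b \<Longrightarrow> site_path W b c \<Longrightarrow> site_path W a c"
  unfolding site_path_def by (rule rtranclp_trans)

lemma site_path_sym: "site_path W a b \<Longrightarrow> site_path W b a"
  unfolding site_path_def
proof (induction rule: rtranclp_induct)
  case base then show ?case by simp
next
  case (step y z)
  then show ?case by (intro converse_rtranclp_into_rtranclp[of _ z y]) (auto intro: site_adj_sym)
qed

lemma site_path_mem: "site_path W a b \<Longrightarrow> a \<in> W \<Longrightarrow> b \<in> W"
  unfolding site_path_def by (induction rule: rtranclp_induct) auto

lemma site_path_mono: "site_path W a b \<Longrightarrow> W \<subseteq> W' \<Longrightarrow> site_path W' a b"
  unfolding site_path_def
proof (induction rule: rtranclp_induct)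
  case base then show ?case by simp
next
  case (step y z)
  then show ?case
    using rtranclp.rtrancl_into_rtrancl[of "\<lambda>a b. a \<in> W' \<and> b \<in> W' \<and> site_adj a b" a y z] by blast
qed

lemma site_path_comp:
  assumes "site_path W y z" shows "site_path (sitecomp W y) y z"
proof -
  have "(\<lambda>a b. a \<in> W \<and> b \<in> W \<and> site_adj a b)\<^sup>*\<^sup>* y z" using assms by (simp add: site_path_def)
  then show ?thesis
  proof (induction rule: rtranclp_induct)
    case base then show ?case by (rule site_path_refl)
  next
    case (step b c)
    have sb: "site_path W y b" unfolding site_path_def by (rule step.hyps(1))
    then have "site_path W y c" using step.hyps(2) by (auto intro: site_path_step)
    then have "b \<in> sitecomp W y" "c \<in> sitecomp W y" using sb by (auto simp: sitecomp_def)
    moreover have "site_adj b c" using step.hyps(2) by simp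
    ultimately show ?case using site_path_step[of "sitecomp W y" y b c] step.IH by blast
  qed
qed

lemma comp_component: "y \<in> W \<Longrightarrow> site_component W (sitecomp W y)"
proof -
  assume y: "y \<in> W"
  have sub: "sitecomp W y \<subseteq> W"
  proof
    fix z assume "z \<in> sitecomp W y"
    then show "z \<in> W" using site_path_mem[of W y z] y by (simp add: sitecomp_def)
  qed
  have con: "site_connected (sitecomp W y)"
    unfolding site_connected_def
  proof (intro ballI)
    fix a b assume "a \<in> sitecomp W y" "b \<in> sitecomp W y"
    then have "site_path (sitecomp W y) y a" "site_path (sitecomp W y) y b"
      using site_path_comp[of W y a] site_path_comp[of W y b] by (auto simp: sitecomp_def)
    then show "site_path (sitecomp W y) a b" by (metis site_path_sym site_path_trans)
  qed
  have max: "D = sitecomp W y" if "sitecomp W y \<subseteq> D" "D \<subseteq> W" "site_connected D" for D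
  proof
    show "D \<subseteq> sitecomp W y"
    proof
      fix z assume "z \<in> D"
      have "y \<in> sitecomp W y" by (simp add: sitecomp_def site_path_refl)
      then have "y \<in> D" using that by auto
      then have "site_path D y z" using \<open>z \<in> D\<close> that(3) by (auto simp: site_connected_def)
      then show "z \<in> sitecomp W y" using that(2) by (auto simp: sitecomp_def intro: site_path_mono)
    qed
  qed (use that in auto)
  have "y \<in> sitecomp W y" by (simp add: sitecomp_def site_path_refl)
  then show ?thesis using sub con max unfolding site_component_def by blast
qed

lemma component_eq_comp:
  assumes "site_component W C" "y \<in> C"
  shows "C = sitecomp W y"
proof -
  have "C \<subseteq> sitecomp W y"
  proof
    fix z assume "z \<in> C"
    then have "site_path C y z" using assms by (auto simp: site_component_def site_connected_def)
    then show "z \<in> sitecomp W y" using assms by (auto simp: sitecomp_def site_component_def intro: site_path_mono)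
  qed
  moreover have "y \<in> W" using assms by (auto simp: site_component_def)
  ultimately show ?thesis using assms(1) comp_component[of y W]
    unfolding site_component_def by blast
qed

lemma comp_same: "site_path W y z \<Longrightarrow> sitecomp W z = sitecomp W y"
  unfolding sitecomp_def by (auto intro: site_path_trans site_path_sym)

lemma closure_iff: "y \<in> lattice_closure V \<longleftrightarrow> y \<in> V \<or> finite (sitecomp (-V) y)"
proof
  assume "y \<in> lattice_closure V"
  then show "y \<in> V \<or> finite (sitecomp (-V) y)"
    unfolding lattice_closure_def using component_eq_comp by blast
next
  assume "y \<in> V \<or> finite (sitecomp (-V) y)"
  moreover have "y \<in> sitecomp (-V) y" by (simp add: sitecomp_def site_path_refl)
  ultimately show "y \<in> lattice_closure V"
    unfolding lattice_closure_def using comp_component[of y "-V"] by blast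
qed

lemma V_sub_closure: "V \<subseteq> lattice_closure V"
  unfolding lattice_closure_def by auto

lemma inner:
  assumes "x \<in> lattice_closure V" "y \<notin> lattice_closure V" "site_adj x y"
  shows "x \<in> V"
proof (rule ccontr)
  assume xV: "x \<notin> V"
  have yV: "y \<notin> V" using assms(2) V_sub_closure by auto
  have "site_path (-V) x y" unfolding site_path_def using xV yV assms(3) by auto
  then have "sitecomp (-V) y = sitecomp (-V) x" by (rule comp_same)
  then show False using assms xV yV closure_iff by metis
qed

lemma outer:
  assumes "y \<notin> lattice_closure V"
  shows "infinite (sitecomp (-V) y)" "z \<in> sitecomp (-V) y \<Longrightarrow> z \<notin> lattice_closure V"
proof -
  show "infinite (sitecomp (-V) y)" using assms closure_iff by blast
  assume z: "z \<in> sitecomp (-V) y"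
  have yV: "y \<notin> V" using assms V_sub_closure by auto
  have "z \<notin> V" using site_path_mem[of "-V" y z] z yV by (simp add: sitecomp_def)
  moreover have "sitecomp (-V) z = sitecomp (-V) y" using z comp_same by (auto simp: sitecomp_def)
  ultimately show "z \<notin> lattice_closure V" using assms closure_iff by metis
qed

lemma path_const:
  assumes "\<And>a b. a \<in> W \<Longrightarrow> b \<in> W \<Longrightarrow> site_adj a b \<Longrightarrow> F a = F b"
    and "site_path W y z"
  shows "F y = F z"
  using assms(2) unfolding site_path_def
  by (induction rule: rtranclp_induct) (use assms(1) in auto)

lemma finite_support_false:
  assumes fin: "finite {v. F v}" and inf: "infinite C" and y: "y \<in> C"
    and const: "\<And>z. z \<in> C \<Longrightarrow> F z = F y"
  shows "\<not> F y"
proof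
  assume "F y"
  then have "C \<subseteq> {v. F v}" using const by auto
  then show False using fin inf finite_subset by blast
qed

lemma outer_false:
  assumes fin: "finite {v. F v}" and y: "y \<notin> lattice_closure V"
    and inv: "\<And>a b. a \<notin> V \<Longrightarrow> b \<notin> V \<Longrightarrow> site_adj a b \<Longrightarrow> F a = F b"
  shows "\<not> F y"
proof (rule finite_support_false[OF fin outer(1)[OF y]])
  show "y \<in> sitecomp (-V) y" by (simp add: sitecomp_def site_path_refl)
  fix z assume z: "z \<in> sitecomp (-V) y"
  have yV: "y \<notin> V" using y V_sub_closure by auto
  have sub: "sitecomp (-V) y \<subseteq> -V"
  proof
    fix z assume "z \<in> sitecomp (-V) y"
    then show "z \<in> -V" using site_path_mem[of "-V" y z] yV by (simp add: sitecomp_def)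
  qed
  have sp: "site_path (sitecomp (-V) y) y z" using z site_path_comp[of "-V" y z] by (auto simp: sitecomp_def)
  have "F y = F z"
  proof (rule path_const[OF _ sp])
    fix a b assume "a \<in> sitecomp (-V) y" "b \<in> sitecomp (-V) y" "site_adj a b"
    then show "F a = F b" using sub inv[of a b] by blast
  qed
  then show "F z = F y" by simp
qed



lemma B_edge_sym: "B_edge V p q \<Longrightarrow> B_edge V q p"
  using bisects_swap2 unfolding B_edge_def by blast

lemma B_edge_adj: "B_edge V p q \<Longrightarrow> site_adj p q"
  by (auto simp: B_edge_def bisects_def dual_adj_def)

lemma B_edge_irr: "\<not> B_edge V p p"
  by (auto simp: B_edge_def bisects_def dual_adj_def site_adj_def)

lemma B_edge_differ:
  assumes "B_edge V p q" "bisects p q x y"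
  shows "(x \<in> lattice_closure V) \<noteq> (y \<in> lattice_closure V)"
proof -
  from assms(1) obtain x' y' where "bisects p q x' y'"
    "(x' \<in> lattice_closure V \<and> y' \<notin> lattice_closure V) \<or> (y' \<in> lattice_closure V \<and> x' \<notin> lattice_closure V)"
    unfolding B_edge_def by blast
  with bisects_primal_unique[OF assms(2) this(1)] show ?thesis by auto
qed

lemma cnt_pos:
  assumes "odd (cnt g N s t)"
  shows "\<exists>i<N. (g i = s \<and> g (Suc i) = t) \<or> (g i = t \<and> g (Suc i) = s)"
proof (rule ccontr)
  assume "\<not> ?thesis"
  then have "cnt g N s t = 0" unfolding cnt_def by (intro sum.neutral) auto
  then show False using assms by simp
qed

lemma no_circuit:
  assumes conn: "site_connected V" and inf: "infinite V" and circ: "is_circuit (B_edge V) n c"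
  shows False
proof -
  define L where "L = lattice_closure V"
  define g where "g i = c (i mod n)" for i
  from circ have n3: "n \<ge> 3" and injc: "inj_on c {..<n}" and ce: "\<forall>i<n. B_edge V (c i) (c ((i + 1) mod n))"
    by (auto simp: is_circuit_def)
  have cl: "g 0 = g n" by (simp add: g_def)
  have Badj: "\<forall>i<n. B_edge V (g i) (g (Suc i))"
    using ce by (auto simp: g_def)
  have adj: "\<forall>i<n. site_adj (g i) (g (Suc i))" using Badj B_edge_adj by blast
  define F where "F = Fv g n"
  have fin: "finite {v. F v}" unfolding F_def by (rule Fv_finite[OF adj cl])
  have inv: "F a = F b" if ab: "site_adj a b" "(a \<in> L) = (b \<in> L)" for a b
  proof (rule ccontr)
    assume ne: "F a \<noteq> F b"
    obtain p q where bi: "bisects p q a b" using exists_bisector[OF ab(1)] by blast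
    have "odd (cnt g n p q)" using F_adj[OF adj cl ab(1) bi] ne by (simp add: F_def)
    then obtain i where "i < n" "(g i = p \<and> g (Suc i) = q) \<or> (g i = q \<and> g (Suc i) = p)"
      using cnt_pos by blast
    then have "B_edge V p q" using Badj B_edge_sym by metis
    then show False using B_edge_differ[OF _ bi] ab(2) by (simp add: L_def)
  qed
  have VL: "V \<subseteq> L" unfolding L_def by (rule V_sub_closure)
  obtain x0 where x0: "x0 \<in> V" using inf by (metis ex_in_conv finite.emptyI)
  have constV: "F z = F x0" if "z \<in> V" for z
  proof -
    have "site_path V x0 z" using conn x0 that by (auto simp: site_connected_def)
    then have "F x0 = F z"
      by (rule path_const[rotated]) (use VL inv in blast)
    then show ?thesis by simp
  qed
  have nx0: "\<not> F x0" by (rule finite_support_false[OF fin inf x0 constV])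
  have FV: "\<not> F z" if "z \<in> V" for z using constV[OF that] nx0 by simp
  have e01: "B_edge V (c 0) (c 1)" using ce n3 by (metis One_nat_def add_0 mod_less less_le_trans numeral_le_iff one_less_numeral_iff semiring_norm(76) zero_less_numeral le_eq_less_or_eq less_one not_less_eq_eq nat_le_linear order_less_le_trans Suc_1 less_Suc_eq_le numeral_3_eq_3)
  then obtain x y where bxy: "bisects (c 0) (c 1) x y" "x \<in> L" "y \<notin> L"
    unfolding B_edge_def L_def by (metis bisects_swap)
  have g_lt: "g i = c i" if "i < n" for i using that by (simp add: g_def)
  have cnt1: "cnt g n (c 0) (c 1) = 1"
  proof -
    have "cnt g n (c 0) (c 1) = (\<Sum>i<n. if i = 0 then 1 else 0)"
      unfolding cnt_def
    proof (rule sum.cong)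
      fix i assume "i \<in> {..<n}"
      then have i: "i < n" by simp
      have gi: "g i = c i" using i by (simp add: g_def)
      have gs: "g (Suc i) = c (Suc i mod n)" by (simp add: g_def)
      have c1: "c 1 = c (Suc 0 mod n)" using n3 by simp
      show "(if g i = c 0 \<and> g (Suc i) = c 1 \<or> g i = c 1 \<and> g (Suc i) = c 0 then 1 else 0) =
            (if i = 0 then 1 else (0::nat))"
      proof (cases "i = 0")
        case True then show ?thesis using gi gs c1 by simp
      next
        case False
        have "g i \<noteq> c 0"
        proof
          assume "g i = c 0"
          then have "c i = c 0" using gi by simp
          from inj_onD[OF injc this] i n3 have "i = 0" by auto
          then show False using False by simp
        qed
        moreover have "\<not> (g i = c 1 \<and> g (Suc i) = c 0)"
        proof
          assume h: "g i = c 1 \<and> g (Suc i) = c 0"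
          have "1 < n" using n3 by simp
          then have "i = 1" using inj_onD[OF injc, of i 1] i h gi by auto
          then have "c 2 = c 0" using h gs n3 by (simp add: numeral_2_eq_2)
          moreover have "(2::nat) < n" using n3 by simp
          ultimately show False using inj_onD[OF injc, of 2 0] by auto
        qed
        ultimately show ?thesis using False by auto
      qed
    qed simp
    also have "\<dots> = 1" using n3 by simp
    finally show ?thesis .
  qed
  have xy: "site_adj x y" using bxy(1) by (simp add: bisects_def)
  have "F x \<noteq> F y" using F_adj[OF adj cl xy bxy(1)] cnt1 by (simp add: F_def)
  moreover have "x \<in> V" using inner[OF _ _ xy] bxy unfolding L_def by blast
  ultimately have Fy: "F y" using FV by blast
  have "\<not> F y"
  proof (rule outer_false[OF fin])
    show "y \<notin> lattice_closure V" using bxy L_def by simp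
    fix a b assume h: "a \<notin> V" "b \<notin> V" "site_adj a b"
    have "(a \<in> L) = (b \<in> L)"
      using inner[OF _ _ h(3), of V] inner[OF _ _ site_adj_sym[OF h(3)], of V] h unfolding L_def by blast
    then show "F a = F b" using inv h by blast
  qed
  then show False using Fy by simp
qed



definition ind :: "pt \<Rightarrow> pt \<Rightarrow> pt \<Rightarrow> pt \<Rightarrow> nat" where
  "ind p q s t = (if (p = s \<and> q = t) \<or> (p = t \<and> q = s) then 1 else 0)"

lemma closed_walk_setup:
  fixes \<gamma> :: "nat \<Rightarrow> pt"
  assumes g0: "\<gamma> 0 = s0" and gn: "\<gamma> n = s1"
    and steps: "\<forall>i<n. \<gamma> i \<in> V \<and> \<gamma> (Suc i) \<in> V \<and> site_adj (\<gamma> i) (\<gamma> (Suc i))"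
    and s0V: "s0 \<in> V" and a1: "site_adj s1 m" and a2: "site_adj m s0"
    and gdef: "g = (\<lambda>i. if i \<le> n then \<gamma> i else if i = Suc n then m else s0)"
  shows "\<forall>i<Suc (Suc n). site_adj (g i) (g (Suc i))" and "g 0 = g (Suc (Suc n))"
    and "s \<notin> V \<or> t \<notin> V \<Longrightarrow> cnt g (Suc (Suc n)) s t = ind s1 m s t + ind m s0 s t"
proof -
  show "\<forall>i<Suc (Suc n). site_adj (g i) (g (Suc i))"
  proof (intro allI impI)
    fix i assume i: "i < Suc (Suc n)"
    then consider "i < n" | "i = n" | "i = Suc n" by linarith
    then show "site_adj (g i) (g (Suc i))"
    proof cases
      case 1 then show ?thesis using steps by (simp add: gdef)
    next
      case 2 then show ?thesis using a1 gn by (simp add: gdef)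
    next
      case 3 then show ?thesis using a2 by (simp add: gdef)
    qed
  qed
  show "g 0 = g (Suc (Suc n))" using g0 by (simp add: gdef)
  assume st: "s \<notin> V \<or> t \<notin> V"
  have inV: "\<gamma> i \<in> V" if "i \<le> n" for i
  proof (cases i)
    case 0 then show ?thesis using g0 s0V by simp
  next
    case (Suc j) then show ?thesis using steps that by auto
  qed
  have "cnt g (Suc (Suc n)) s t = cnt g n s t + ind s1 m s t + ind m s0 s t"
    unfolding cnt_def ind_def using gn by (simp add: gdef)
  moreover have "cnt g n s t = 0"
    unfolding cnt_def
  proof (rule sum.neutral, intro ballI)
    fix i assume "i \<in> {..<n}"
    then have "g i \<in> V" "g (Suc i) \<in> V" using inV by (auto simp: gdef)
    then show "(if g i = s \<and> g (Suc i) = t \<or> g i = t \<and> g (Suc i) = s then 1 else 0) = 0"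
      using st by auto
  qed
  ultimately show "cnt g (Suc (Suc n)) s t = ind s1 m s t + ind m s0 s t" by simp
qed

lemma inv_dirs:
  assumes R: "\<And>a1 a2. (a1,a2) \<notin> V \<Longrightarrow> (a1+1,a2) \<notin> V \<Longrightarrow> F (a1,a2) = F (a1+1,a2)"
    and U: "\<And>a1 a2. (a1,a2) \<notin> V \<Longrightarrow> (a1,a2+1) \<notin> V \<Longrightarrow> F (a1,a2) = F (a1,a2+1)"
    and h: "p \<notin> V" "q \<notin> V" "site_adj p q"
  shows "F p = F q"
proof -
  obtain a1 a2 where p: "p = (a1,a2)" by (cases p)
  from h(3) have "q = (a1+1,a2) \<or> q = (a1-1,a2) \<or> q = (a1,a2+1) \<or> q = (a1,a2-1)"
    unfolding p site_adj_iff by simp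
  then show ?thesis
  proof (elim disjE)
    assume q: "q = (a1+1,a2)" then show ?thesis using R h p by simp
  next
    assume q: "q = (a1-1,a2)" then show ?thesis using R[of "a1-1" a2] h p by simp
  next
    assume q: "q = (a1,a2+1)" then show ?thesis using U h p by simp
  next
    assume q: "q = (a1,a2-1)" then show ?thesis using U[of a1 "a2-1"] h p by simp
  qed
qed

lemma path_in_V:
  assumes "site_connected V" "x \<in> V" "y \<in> V"
  shows "\<exists>n \<gamma>. \<gamma> 0 = x \<and> \<gamma> n = y \<and> (\<forall>i<n. \<gamma> i \<in> V \<and> \<gamma> (Suc i) \<in> V \<and> site_adj (\<gamma> i) (\<gamma> (Suc i)))"
proof -
  have "site_path V x y" using assms by (auto simp: site_connected_def)
  then show ?thesis unfolding site_path_def by (rule rtranclp_seq)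
qed

lemma checker1:
  assumes conn: "site_connected V"
    and hx: "(a,b) \<in> lattice_closure V" "(a+1,b+1) \<in> lattice_closure V"
      "(a+1,b) \<notin> lattice_closure V" "(a,b+1) \<notin> lattice_closure V"
  shows False
proof -
  have xV: "(a,b) \<in> V" using inner[OF hx(1) hx(4)] by (simp add: site_adj_def)
  have zV: "(a+1,b+1) \<in> V" using inner[OF hx(2) hx(4)] by (simp add: site_adj_def)
  have wV: "(a+1,b) \<notin> V" and uV: "(a,b+1) \<notin> V" using hx V_sub_closure by auto
  obtain n \<gamma> where p: "\<gamma> 0 = (a,b)" "\<gamma> n = (a+1,b+1)"
    "\<forall>i<n. \<gamma> i \<in> V \<and> \<gamma> (Suc i) \<in> V \<and> site_adj (\<gamma> i) (\<gamma> (Suc i))"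
    using path_in_V[OF conn xV zV] by blast
  define g where "g = (\<lambda>i. if i \<le> n then \<gamma> i else if i = Suc n then (a+1,b) else (a,b))"
  note cw = closed_walk_setup[OF p xV _ _ g_def]
  have adj: "\<forall>i<Suc (Suc n). site_adj (g i) (g (Suc i))" and cl: "g 0 = g (Suc (Suc n))"
    using cw by (auto simp: site_adj_def)
  have cntf: "cnt g (Suc (Suc n)) s t = ind (a+1,b+1) (a+1,b) s t + ind (a+1,b) (a,b) s t"
    if "s \<notin> V \<or> t \<notin> V" for s t
    using cw(3)[of s t] that by (simp add: site_adj_def)
  define F where "F = Fv g (Suc (Suc n))"
  have fin: "finite {v. F v}" unfolding F_def by (rule Fv_finite[OF adj cl])
  have inv: "F p = F q" if "p \<notin> V" "q \<notin> V" "site_adj p q" for p q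
  proof (rule inv_dirs[OF _ _ that])
    fix a1 a2 assume h: "(a1,a2) \<notin> V" "(a1+1,a2) \<notin> V"
    have "cnt g (Suc (Suc n)) (a1,a2-1) (a1,a2) = 0"
      using cntf[of "(a1,a2-1)" "(a1,a2)"] h zV by (auto simp: ind_def)
    then show "F (a1,a2) = F (a1+1,a2)" unfolding F_def using F_right[of g "Suc (Suc n)" a1 a2] by (simp del: Fv_def)
  next
    fix a1 a2 assume h: "(a1,a2) \<notin> V" "(a1,a2+1) \<notin> V"
    have "cnt g (Suc (Suc n)) (a1-1,a2) (a1,a2) = 0"
      using cntf[of "(a1-1,a2)" "(a1,a2)"] h zV by (auto simp: ind_def)
    then show "F (a1,a2) = F (a1,a2+1)" unfolding F_def using F_up[OF adj cl, of a1 a2] by (simp del: Fv_def)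
  qed
  have nu: "\<not> F (a,b+1)" by (rule outer_false[OF fin hx(4) inv])
  have nw: "\<not> F (a+1,b)" by (rule outer_false[OF fin hx(3) inv])
  have "cnt g (Suc (Suc n)) (a,b) (a,b+1) = 0"
    using cntf[of "(a,b)" "(a,b+1)"] uV by (auto simp: ind_def)
  then have e1: "F (a,b+1) = F (a+1,b+1)" unfolding F_def using F_right[of g "Suc (Suc n)" a "b+1"] by (simp del: Fv_def)
  have "cnt g (Suc (Suc n)) (a,b) (a+1,b) = 1"
    using cntf[of "(a,b)" "(a+1,b)"] wV by (auto simp: ind_def)
  then have e2: "F (a+1,b) \<noteq> F (a+1,b+1)" unfolding F_def using F_up[OF adj cl, of "a+1" b] by (simp del: Fv_def)
  show False using nu nw e1 e2 by simp
qed

lemma checker2: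
  assumes conn: "site_connected V"
    and hx: "(a+1,b) \<in> lattice_closure V" "(a,b+1) \<in> lattice_closure V"
      "(a,b) \<notin> lattice_closure V" "(a+1,b+1) \<notin> lattice_closure V"
  shows False
proof -
  have wV: "(a+1,b) \<in> V" using inner[OF hx(1) hx(3)] by (simp add: site_adj_def)
  have uV: "(a,b+1) \<in> V" using inner[OF hx(2) hx(3)] by (simp add: site_adj_def)
  have xV: "(a,b) \<notin> V" and zV: "(a+1,b+1) \<notin> V" using hx V_sub_closure by auto
  obtain n \<gamma> where p: "\<gamma> 0 = (a+1,b)" "\<gamma> n = (a,b+1)"
    "\<forall>i<n. \<gamma> i \<in> V \<and> \<gamma> (Suc i) \<in> V \<and> site_adj (\<gamma> i) (\<gamma> (Suc i))"
    using path_in_V[OF conn wV uV] by blast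
  define g where "g = (\<lambda>i. if i \<le> n then \<gamma> i else if i = Suc n then (a,b) else (a+1,b))"
  note cw = closed_walk_setup[OF p wV _ _ g_def]
  have adj: "\<forall>i<Suc (Suc n). site_adj (g i) (g (Suc i))" and cl: "g 0 = g (Suc (Suc n))"
    using cw by (auto simp: site_adj_def)
  have cntf: "cnt g (Suc (Suc n)) s t = ind (a,b+1) (a,b) s t + ind (a,b) (a+1,b) s t"
    if "s \<notin> V \<or> t \<notin> V" for s t
    using cw(3)[of s t] that by (simp add: site_adj_def)
  define F where "F = Fv g (Suc (Suc n))"
  have fin: "finite {v. F v}" unfolding F_def by (rule Fv_finite[OF adj cl])
  have inv: "F p = F q" if "p \<notin> V" "q \<notin> V" "site_adj p q" for p q
  proof (rule inv_dirs[OF _ _ that])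
    fix a1 a2 assume h: "(a1,a2) \<notin> V" "(a1+1,a2) \<notin> V"
    have "cnt g (Suc (Suc n)) (a1,a2-1) (a1,a2) = 0"
      using cntf[of "(a1,a2-1)" "(a1,a2)"] h uV by (auto simp: ind_def)
    then show "F (a1,a2) = F (a1+1,a2)" unfolding F_def using F_right[of g "Suc (Suc n)" a1 a2] by (simp del: Fv_def)
  next
    fix a1 a2 assume h: "(a1,a2) \<notin> V" "(a1,a2+1) \<notin> V"
    have "cnt g (Suc (Suc n)) (a1-1,a2) (a1,a2) = 0"
      using cntf[of "(a1-1,a2)" "(a1,a2)"] h wV by (auto simp: ind_def)
    then show "F (a1,a2) = F (a1,a2+1)" unfolding F_def using F_up[OF adj cl, of a1 a2] by (simp del: Fv_def)
  qed
  have nx: "\<not> F (a,b)" by (rule outer_false[OF fin hx(3) inv])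
  have nz: "\<not> F (a+1,b+1)" by (rule outer_false[OF fin hx(4) inv])
  have "cnt g (Suc (Suc n)) (a,b-1) (a,b) = 0"
    using cntf[of "(a,b-1)" "(a,b)"] xV by (auto simp: ind_def)
  then have e1: "F (a,b) = F (a+1,b)" unfolding F_def using F_right[of g "Suc (Suc n)" a b] by (simp del: Fv_def)
  have "cnt g (Suc (Suc n)) (a,b) (a+1,b) = 1"
    using cntf[of "(a,b)" "(a+1,b)"] xV by (auto simp: ind_def)
  then have e2: "F (a+1,b) \<noteq> F (a+1,b+1)" unfolding F_def using F_up[OF adj cl, of "a+1" b] by (simp del: Fv_def)
  show False using nx nz e1 e2 by simp
qed

lemma B_edge_char:
  "B_edge V (a,b) q \<longleftrightarrow>
    (q = (a+1,b) \<and> (((a+1,b) \<in> lattice_closure V) \<noteq> ((a+1,b+1) \<in> lattice_closure V))) \<or>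
    (q = (a-1,b) \<and> (((a,b) \<in> lattice_closure V) \<noteq> ((a,b+1) \<in> lattice_closure V))) \<or>
    (q = (a,b+1) \<and> (((a,b+1) \<in> lattice_closure V) \<noteq> ((a+1,b+1) \<in> lattice_closure V))) \<or>
    (q = (a,b-1) \<and> (((a,b) \<in> lattice_closure V) \<noteq> ((a+1,b) \<in> lattice_closure V)))"
  unfolding B_edge_def bisects_iff by auto

lemma card4:
  fixes a b :: int
  shows "card {q. (q = (a+1,b) \<and> P1) \<or> (q = (a-1,b) \<and> P2) \<or> (q = (a,b+1) \<and> P3) \<or> (q = (a,b-1) \<and> P4)}
    = of_bool P1 + of_bool P2 + of_bool P3 + of_bool P4"
  by (cases P1; cases P2; cases P3; cases P4) (simp_all add: Collect_disj_eq)

lemma degree2: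
  assumes conn: "site_connected V" and p: "p \<in> B_verts V"
  shows "B_degree V p = 2"
proof -
  obtain a b where pe: "p = (a,b)" by (cases p)
  define X where "X = ((a,b) \<in> lattice_closure V)"
  define W where "W = ((a+1,b) \<in> lattice_closure V)"
  define Z where "Z = ((a+1,b+1) \<in> lattice_closure V)"
  define U where "U = ((a,b+1) \<in> lattice_closure V)"
  have "B_degree V p = card {q. (q = (a+1,b) \<and> W \<noteq> Z) \<or> (q = (a-1,b) \<and> X \<noteq> U) \<or> (q = (a,b+1) \<and> U \<noteq> Z) \<or> (q = (a,b-1) \<and> X \<noteq> W)}"
    unfolding B_degree_def pe B_edge_char X_def W_def Z_def U_def by (rule refl)
  also have "\<dots> = of_bool (W \<noteq> Z) + of_bool (X \<noteq> U) + of_bool (U \<noteq> Z) + of_bool (X \<noteq> W)"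
    by (rule card4)
  finally have deg: "B_degree V p = of_bool (W \<noteq> Z) + of_bool (X \<noteq> U) + of_bool (U \<noteq> Z) + of_bool (X \<noteq> W)" .
  have ne: "B_degree V p \<noteq> 0"
  proof -
    obtain q where "B_edge V p q" using p by (auto simp: B_verts_def)
    then show ?thesis unfolding deg unfolding pe B_edge_char X_def W_def Z_def U_def by auto
  qed
  have c1: "\<not> (X \<and> Z \<and> \<not> W \<and> \<not> U)" using checker1[OF conn, of a b] X_def W_def Z_def U_def by blast
  have c2: "\<not> (W \<and> U \<and> \<not> X \<and> \<not> Z)" using checker2[OF conn, of a b] X_def W_def Z_def U_def by blast
  show ?thesis using ne c1 c2 unfolding deg by (cases X; cases W; cases Z; cases U) auto
qed



lemma three_nbrs:
  assumes deg: "card {c. E a c} = 2" and "E a b" "E a c" "E a d" "b \<noteq> c" "b \<noteq> d" "c \<noteq> d"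
  shows False
proof -
  have fin: "finite {c. E a c}" using deg by (metis card.infinite zero_neq_numeral)
  have "{b,c,d} \<subseteq> {c. E a c}" using assms by auto
  then have "card {b,c,d} \<le> 2" using card_mono[OF fin] deg by metis
  moreover have "card {b,c,d} = 3" using assms by simp
  ultimately show False by simp
qed

lemma other_nbr:
  assumes deg: "card {c. E a c} = 2" and "E a b"
  shows "\<exists>c. E a c \<and> c \<noteq> b"
proof (rule ccontr)
  assume "\<not> ?thesis"
  then have "{c. E a c} \<subseteq> {b}" by auto
  then have "card {c. E a c} \<le> card {b}" by (intro card_mono) auto
  then have "card {c. E a c} \<le> 1" by simp
  then show False using deg by simp
qed

lemma nbhd_exact:
  assumes deg: "card {c. E a c} = 2" and "E a b" "E a c" "b \<noteq> c"
  shows "E a v \<longleftrightarrow> v = b \<or> v = c"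
  using three_nbrs[where E=E and a=a and b=b and c=c and d=v] assms by auto

primrec wk :: "(pt \<Rightarrow> pt \<Rightarrow> bool) \<Rightarrow> pt \<Rightarrow> pt \<Rightarrow> nat \<Rightarrow> pt \<times> pt" where
  "wk E p q 0 = (p, q)"
| "wk E p q (Suc k) = (snd (wk E p q k), SOME c. E (snd (wk E p q k)) c \<and> c \<noteq> fst (wk E p q k))"

definition fw :: "(pt \<Rightarrow> pt \<Rightarrow> bool) \<Rightarrow> pt \<Rightarrow> pt \<Rightarrow> nat \<Rightarrow> pt" where
  "fw E p q k = fst (wk E p q k)"

locale G2 =
  fixes E :: "pt \<Rightarrow> pt \<Rightarrow> bool"
  assumes symE: "\<And>a b. E a b \<Longrightarrow> E b a"
    and irr: "\<And>a. \<not> E a a"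
    and deg: "\<And>a b. E a b \<Longrightarrow> card {c. E a c} = 2"
begin

lemma wk_edge: "E p q \<Longrightarrow> E (fst (wk E p q k)) (snd (wk E p q k)) \<and>
   (k > 0 \<longrightarrow> snd (wk E p q k) \<noteq> fst (wk E p q (k - 1)) \<and> fst (wk E p q k) = snd (wk E p q (k-1)))"
proof (induction k)
  case 0 then show ?case by simp
next
  case (Suc k)
  let ?a = "fst (wk E p q k)" and ?b = "snd (wk E p q k)"
  have ba: "E ?b ?a" using Suc symE by blast
  have "\<exists>c. E ?b c \<and> c \<noteq> ?a" by (rule other_nbr[where E=E and a="?b" and b="?a", OF deg[OF ba] ba])
  then have h: "E ?b (SOME c. E ?b c \<and> c \<noteq> ?a) \<and> (SOME c. E ?b c \<and> c \<noteq> ?a) \<noteq> ?a"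
    by (rule someI_ex)
  have e1: "fst (wk E p q (Suc k)) = ?b" by (simp only: wk.simps fst_conv)
  have e2: "snd (wk E p q (Suc k)) = (SOME c. E ?b c \<and> c \<noteq> ?a)" by (simp only: wk.simps snd_conv)
  have e3: "Suc k - 1 = k" by simp
  show ?case unfolding e1 e2 e3 using h by blast
qed

lemma fw_props:
  assumes "E p q"
  shows "fw E p q 0 = p" "fw E p q (Suc 0) = q" "E (fw E p q k) (fw E p q (Suc k))"
    "fw E p q (Suc (Suc k)) \<noteq> fw E p q k"
proof -
  show "fw E p q 0 = p" by (simp add: fw_def)
  show "fw E p q (Suc 0) = q" by (simp add: fw_def)
  have a: "fw E p q (Suc k) = snd (wk E p q k)" for k by (simp add: fw_def)
  show "E (fw E p q k) (fw E p q (Suc k))" using wk_edge[OF assms, of k] a by (simp add: fw_def)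
  show "fw E p q (Suc (Suc k)) \<noteq> fw E p q k"
    using wk_edge[OF assms, of "Suc k"] a by (simp add: fw_def)
qed

lemma walk_circuit:
  assumes pq: "E p q" and ninj: "\<not> inj (fw E p q)"
  shows "\<exists>n c. is_circuit E n c \<and> p \<in> c ` {..<n} \<and>
    (\<forall>u \<in> c ` {..<n}. \<forall>v. E u v \<longleftrightarrow>
       (\<exists>i<n. (u = c i \<and> v = c ((i + 1) mod n)) \<or> (v = c i \<and> u = c ((i + 1) mod n))))"
proof -
  define f where "f = fw E p q"
  note fp = fw_props[OF pq, folded f_def]
  define P where "P j \<longleftrightarrow> (\<exists>i<j. f i = f j)" for j
  have exP: "\<exists>j. P j"
  proof -
    from ninj obtain x y where "x \<noteq> y" "f x = f y" unfolding inj_def f_def by blast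
    then show ?thesis unfolding P_def by (metis linorder_neqE_nat)
  qed
  define j where "j = (LEAST j. P j)"
  have Pj: "P j" unfolding j_def using exP by (metis LeastI)
  have minj: "\<not> P j'" if "j' < j" for j' using that not_less_Least unfolding j_def by blast
  have injj: "inj_on f {..<j}"
  proof (rule inj_onI)
    fix x y assume "x \<in> {..<j}" "y \<in> {..<j}" "f x = f y"
    then show "x = y" using minj unfolding P_def by (metis lessThan_iff linorder_neqE_nat)
  qed
  obtain i where i: "i < j" "f i = f j" using Pj unfolding P_def by blast
  have i0: "i = 0"
  proof (rule ccontr)
    assume "i \<noteq> 0"
    then obtain i' where i': "i = Suc i'" by (cases i) auto
    have "j \<noteq> Suc i" using fp(3)[of i] irr i by metis
    moreover have "j \<noteq> Suc (Suc i)" using fp(4)[of i] i by metis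
    ultimately obtain j' where j': "j = Suc j'" "Suc i < j'" using i by (cases j) auto
    have e1: "E (f i) (f i')" using fp(3)[of i'] symE i' by simp
    have e2: "E (f i) (f (Suc i))" using fp(3)[of i] by simp
    have e3: "E (f i) (f j')" using fp(3)[of j'] symE j' i by simp
    have d1: "f i' \<noteq> f (Suc i)" using fp(4)[of i'] i' by simp
    have d2: "f i' \<noteq> f j'" using injj j' i' by (metis inj_on_eq_iff lessThan_iff lessI less_trans Suc_lessD nat_neq_iff)
    have d3: "f (Suc i) \<noteq> f j'" using injj j' by (metis inj_on_eq_iff lessThan_iff lessI less_trans nat_neq_iff)
    show False using three_nbrs[where E=E and a="f i" and b="f i'" and c="f (Suc i)" and d="f j'"] deg[OF e1] e1 e2 e3 d1 d2 d3 by blast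
  qed
  have f0j: "f 0 = f j" using i i0 by simp
  have j3: "j \<ge> 3"
  proof -
    have "j \<noteq> 1" using fp(3)[of 0] irr f0j by (metis One_nat_def)
    moreover have "j \<noteq> 2" using fp(4)[of 0] f0j by (metis numeral_2_eq_2)
    ultimately show ?thesis using i by linarith
  qed
  have cedge: "E (f k) (f ((k + 1) mod j))" if "k < j" for k
  proof (cases "k + 1 < j")
    case True then show ?thesis using fp(3)[of k] by simp
  next
    case False then have "k + 1 = j" using that by simp
    then show ?thesis using fp(3)[of k] f0j by simp
  qed
  have circ: "is_circuit E j f" unfolding is_circuit_def using j3 injj cedge by blast
  have pin: "p \<in> f ` {..<j}" using fp(1) j3 by (metis image_eqI lessThan_iff less_le_trans zero_less_numeral)
  have nb: "E u v \<longleftrightarrow> (\<exists>i<j. (u = f i \<and> v = f ((i + 1) mod j)) \<or> (v = f i \<and> u = f ((i + 1) mod j)))"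
    if u: "u \<in> f ` {..<j}" for u v
  proof
    assume "\<exists>i<j. (u = f i \<and> v = f ((i + 1) mod j)) \<or> (v = f i \<and> u = f ((i + 1) mod j))"
    then show "E u v" using cedge symE by blast
  next
    assume uv: "E u v"
    obtain k where k: "k < j" "u = f k" using u by auto
    define k' where "k' = (if k = 0 then j - 1 else k - 1)"
    have k'j: "k' < j" using k j3 unfolding k'_def by auto
    have k'k: "(k' + 1) mod j = k" using k j3 by (auto simp: k'_def)
    have e1: "E (f k) (f ((k + 1) mod j))" using cedge k by simp
    have e2: "E (f k) (f k')" using cedge[OF k'j] k'k symE by metis
    have ne: "(k + 1) mod j \<noteq> k'"
    proof (cases "k = 0")
      case True then show ?thesis using j3 by (simp add: k'_def)
    next
      case False
      show ?thesis
      proof (cases "k + 1 < j")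
        case True then show ?thesis using False by (simp add: k'_def)
      next
        case F2: False then have "k + 1 = j" using k by simp
        then show ?thesis using False j3 by (simp add: k'_def)
      qed
    qed
    have "f ((k + 1) mod j) \<noteq> f k'"
      using injj ne k'j j3 by (metis inj_on_eq_iff lessThan_iff mod_less_divisor less_le_trans zero_less_numeral)
    then have "v = f ((k + 1) mod j) \<or> v = f k'" using nbhd_exact[where E=E and a="f k" and b="f ((k + 1) mod j)" and c="f k'" and v=v] deg[OF e1] e1 e2 uv k by blast
    then show "\<exists>i<j. (u = f i \<and> v = f ((i + 1) mod j)) \<or> (v = f i \<and> u = f ((i + 1) mod j))"
      using k k'j k'k by metis
  qed
  show ?thesis using circ pin nb by blast
qed


lemma walk_biinf:
  assumes pq1: "E p q1" and pq2: "E p q2" and ne: "q1 \<noteq> q2"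
    and inj1: "inj (fw E p q1)" and inj2: "inj (fw E p q2)"
  shows "\<exists>h. is_biinf_path E h \<and> p \<in> range h \<and>
    (\<forall>u \<in> range h. \<forall>v. E u v \<longleftrightarrow> (\<exists>i. (u = h i \<and> v = h (i + 1)) \<or> (v = h i \<and> u = h (i + 1))))"
proof -
  define f where "f = fw E p q1"
  define g where "g = fw E p q2"
  note fp = fw_props[OF pq1, folded f_def]
  note gp = fw_props[OF pq2, folded g_def]
  have injf: "f x = f y \<longleftrightarrow> x = y" for x y using inj1 unfolding f_def inj_def by blast
  have injg: "g x = g y \<longleftrightarrow> x = y" for x y using inj2 unfolding g_def inj_def by blast
  have nbf: "E (f (Suc i)) v \<longleftrightarrow> v = f i \<or> v = f (Suc (Suc i))" for i v
  proof -
    have e1: "E (f (Suc i)) (f i)" using fp(3)[of i] symE by blast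
    have e2: "E (f (Suc i)) (f (Suc (Suc i)))" using fp(3)[of "Suc i"] by blast
    have "f i \<noteq> f (Suc (Suc i))" using injf by simp
    then show ?thesis
      using nbhd_exact[where E=E and a="f (Suc i)" and b="f i" and c="f (Suc (Suc i))" and v=v] deg[OF e1] e1 e2
      by blast
  qed
  have claim: "\<forall>i. f (Suc i) \<noteq> g (Suc j)" for j
  proof (induction j)
    case 0
    show ?case
    proof
      fix i
      show "f (Suc i) \<noteq> g (Suc 0)"
      proof
        assume h: "f (Suc i) = g (Suc 0)"
        have "E (g (Suc 0)) (g 0)" using gp(3)[of 0] symE by blast
        then have "E (f (Suc i)) p" using h gp(1) by simp
        then have "p = f i \<or> p = f (Suc (Suc i))" using nbf by blast
        then have "i = 0" using fp(1) injf by (metis nat.distinct(1))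
        then show False using h fp(2) gp(2) ne by simp
      qed
    qed
  next
    case (Suc j)
    show ?case
    proof
      fix i
      show "f (Suc i) \<noteq> g (Suc (Suc j))"
      proof
        assume h: "f (Suc i) = g (Suc (Suc j))"
        have "E (g (Suc (Suc j))) (g (Suc j))" using gp(3)[of "Suc j"] symE by blast
        then have "E (f (Suc i)) (g (Suc j))" using h by simp
        then have "g (Suc j) = f i \<or> g (Suc j) = f (Suc (Suc i))" using nbf by blast
        then show False
        proof
          assume a: "g (Suc j) = f i"
          show False
          proof (cases i)
            case 0 then show False using a fp(1) gp(1) injg[of "Suc j" 0] by simp
          next
            case (Suc i') then show False using a Suc.IH by metis
          qed
        next
          assume "g (Suc j) = f (Suc (Suc i))" then show False using Suc.IH by metis
        qed
      qed
    qed
  qed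
  define h where "h k = (if k \<ge> 0 then f (nat k) else g (nat (-k)))" for k :: int
  have fg: "f a \<noteq> g b" if "b > 0" for a b
  proof (cases a)
    case 0 then show ?thesis using fp(1) gp(1) injg[of b 0] that by simp
  next
    case (Suc a')
    have "b = Suc (b - 1)" using that by simp
    then show ?thesis using claim[of "b - 1"] Suc by metis
  qed
  have injh: "inj h"
  proof (rule injI)
    fix x y assume e: "h x = h y"
    show "x = y"
    proof (cases "x \<ge> 0")
      case True
      show ?thesis
      proof (cases "y \<ge> 0")
        case True then show ?thesis using e \<open>x \<ge> 0\<close> injf by (simp add: h_def)
      next
        case False then show ?thesis using e \<open>x \<ge> 0\<close> fg[of "nat (-y)" "nat x"] by (simp add: h_def)
      qed
    next
      case False
      show ?thesis
      proof (cases "y \<ge> 0")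
        case True then show ?thesis using e \<open>\<not> x \<ge> 0\<close> fg[of "nat (-x)" "nat y"] by (simp add: h_def)
      next
        case False then show ?thesis using e \<open>\<not> x \<ge> 0\<close> injg by (simp add: h_def)
      qed
    qed
  qed
  have edge: "E (h k) (h (k + 1))" for k
  proof (cases "k \<ge> 0")
    case True
    then have "nat (k + 1) = Suc (nat k)" by simp
    then show ?thesis using True fp(3)[of "nat k"] by (simp add: h_def)
  next
    case False
    show ?thesis
    proof (cases "k = -1")
      case True
      then show ?thesis using gp(3)[of 0] symE fp(1) gp(1) by (simp add: h_def)
    next
      case False
      then have k: "k + 1 < 0" using \<open>\<not> k \<ge> 0\<close> by simp
      then have "nat (-k) = Suc (nat (-(k+1)))" by simp
      then show ?thesis using k \<open>\<not> k \<ge> 0\<close> gp(3)[of "nat (-(k+1))"] symE by (simp add: h_def)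
    qed
  qed
  have path: "is_biinf_path E h" unfolding is_biinf_path_def using injh edge by blast
  have pin: "p \<in> range h" using fp(1) by (metis h_def nat_zero_as_int order_refl rangeI)
  have nb: "E u v \<longleftrightarrow> (\<exists>i. (u = h i \<and> v = h (i + 1)) \<or> (v = h i \<and> u = h (i + 1)))"
    if u_in: "u \<in> range h" for u v
  proof
    assume "\<exists>i. (u = h i \<and> v = h (i + 1)) \<or> (v = h i \<and> u = h (i + 1))"
    then show "E u v" using edge symE by blast
  next
    assume uv: "E u v"
    obtain k where k: "u = h k" using u_in by auto
    have e1: "E (h k) (h (k + 1))" by (rule edge)
    have e2: "E (h k) (h (k - 1))" using edge[of "k - 1"] symE by simp
    have "h (k + 1) \<noteq> h (k - 1)" using injh by (metis inj_eq add_diff_cancel_left' diff_minus_eq_add minus_diff_eq one_neq_neg_one add_left_cancel diff_conv_add_uminus)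
    then have "v = h (k + 1) \<or> v = h (k - 1)"
      using nbhd_exact[where E=E and a="h k" and b="h (k + 1)" and c="h (k - 1)" and v=v] deg[OF e1] e1 e2 uv k
      by blast
    then show "\<exists>i. (u = h i \<and> v = h (i + 1)) \<or> (v = h i \<and> u = h (i + 1))"
      using k by (metis diff_add_cancel)
  qed
  show ?thesis using path pin nb by blast
qed

lemma component_cases:
  assumes "E p q"
  shows "(\<exists>n c. is_circuit E n c \<and> p \<in> c ` {..<n} \<and>
             (\<forall>u \<in> c ` {..<n}. \<forall>v. E u v \<longleftrightarrow>
                (\<exists>i<n. (u = c i \<and> v = c ((i + 1) mod n)) \<or> (v = c i \<and> u = c ((i + 1) mod n)))))
        \<or> (\<exists>f. is_biinf_path E f \<and> p \<in> range f \<and>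
             (\<forall>u \<in> range f. \<forall>v. E u v \<longleftrightarrow>
                (\<exists>i. (u = f i \<and> v = f (i + 1)) \<or> (v = f i \<and> u = f (i + 1)))))"
proof -
  obtain q2 where q2: "E p q2" "q2 \<noteq> q"
    using other_nbr[where E=E and a=p and b=q, OF deg[OF assms] assms] by blast
  show ?thesis
  proof (cases "inj (fw E p q)")
    case False then show ?thesis using walk_circuit[OF assms] by blast
  next
    case T1: True
    show ?thesis
    proof (cases "inj (fw E p q2)")
      case False then show ?thesis using walk_circuit[OF q2(1)] by blast
    next
      case True then show ?thesis using walk_biinf[OF assms q2(1) q2(2)[symmetric] T1] by blast
    qed
  qed
qed

end


theorem lemma3:
  fixes V :: "(int \<times> int) set"
  assumes "site_connected V"
  shows "(\<forall>p \<in> B_verts V. B_degree V p = 2)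
    \<and> (\<forall>p \<in> B_verts V.
          (\<exists>n c. is_circuit (B_edge V) n c \<and> p \<in> c ` {..<n} \<and>
             (\<forall>u \<in> c ` {..<n}. \<forall>v. B_edge V u v \<longleftrightarrow>
                (\<exists>i<n. (u = c i \<and> v = c ((i + 1) mod n)) \<or> (v = c i \<and> u = c ((i + 1) mod n)))))
        \<or> (\<exists>f. is_biinf_path (B_edge V) f \<and> p \<in> range f \<and>
             (\<forall>u \<in> range f. \<forall>v. B_edge V u v \<longleftrightarrow>
                (\<exists>i. (u = f i \<and> v = f (i + 1)) \<or> (v = f i \<and> u = f (i + 1))))))
    \<and> (infinite V \<longrightarrow> \<not> (\<exists>n c. is_circuit (B_edge V) n c))"
proof -
  have d: "\<forall>p \<in> B_verts V. B_degree V p = 2" using degree2[OF assms] by blast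
  interpret G2 "B_edge V"
  proof
    show "\<And>a b. B_edge V a b \<Longrightarrow> B_edge V b a" by (rule B_edge_sym)
    show "\<And>a. \<not> B_edge V a a" by (rule B_edge_irr)
    show "\<And>a b. B_edge V a b \<Longrightarrow> card {c. B_edge V a c} = 2"
    proof -
      fix a b assume "B_edge V a b"
      then have "a \<in> B_verts V" unfolding B_verts_def by blast
      then show "card {c. B_edge V a c} = 2" using d by (simp add: B_degree_def)
    qed
  qed
  have c: "\<forall>p \<in> B_verts V.
          (\<exists>n c. is_circuit (B_edge V) n c \<and> p \<in> c ` {..<n} \<and>
             (\<forall>u \<in> c ` {..<n}. \<forall>v. B_edge V u v \<longleftrightarrow>
                (\<exists>i<n. (u = c i \<and> v = c ((i + 1) mod n)) \<or> (v = c i \<and> u = c ((i + 1) mod n)))))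
        \<or> (\<exists>f. is_biinf_path (B_edge V) f \<and> p \<in> range f \<and>
             (\<forall>u \<in> range f. \<forall>v. B_edge V u v \<longleftrightarrow>
                (\<exists>i. (u = f i \<and> v = f (i + 1)) \<or> (v = f i \<and> u = f (i + 1)))))"
  proof
    fix p assume "p \<in> B_verts V"
    then obtain q where "B_edge V p q" by (auto simp: B_verts_def)
    then show "(\<exists>n c. is_circuit (B_edge V) n c \<and> p \<in> c ` {..<n} \<and>
             (\<forall>u \<in> c ` {..<n}. \<forall>v. B_edge V u v \<longleftrightarrow>
                (\<exists>i<n. (u = c i \<and> v = c ((i + 1) mod n)) \<or> (v = c i \<and> u = c ((i + 1) mod n)))))
        \<or> (\<exists>f. is_biinf_path (B_edge V) f \<and> p \<in> range f \<and>
             (\<forall>u \<in> range f. \<forall>v. B_edge V u v \<longleftrightarrow>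
                (\<exists>i. (u = f i \<and> v = f (i + 1)) \<or> (v = f i \<and> u = f (i + 1)))))"
      by (rule component_cases)
  qed
  have n: "infinite V \<longrightarrow> \<not> (\<exists>n c. is_circuit (B_edge V) n c)"
    using no_circuit[OF assms] by blast
  show ?thesis using d c n by blast
qed

end
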